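(* Let $n,t\geq 3$ be integers. If $t$ is odd, then for all $\mathbf u,\mathbf v\in D_{n,t-2}$ and $\mathbf w\in D^*_{n,t-2}$ the sets $E_1(\mathbf u)$, $E_2(\mathbf v)$, $E_3(\mathbf w)$ are pairwise disjoint. If $t$ is even, then for all $\mathbf u,\mathbf v,\mathbf w\in D^*_{n,t-2}$ the sets $E_1(\mathbf u)$, $E_2(\mathbf v)$, $E_3(\mathbf w)$ and $\{1^{t-2}\alpha1:\alpha\in[n]\}$ are pairwise disjoint. Moreover, for each $i\in\{1,2,3\}$, $E_i(\mathbf u)\cap E_i(\mathbf v)=\emptyset$ whenever $\mathbf u\neq\mathbf v$ are in the domain on which $E_i$ is defined.
   Context: For a positive integer $n$ let $[n]=\{1,\dots,n\}$; vertices of the Sierpiński graph $S(K_n,t)$ are words in $[n]^t$. Write $a^k$ for the word consisting of $k$ copies of the letter $a$, and $D^*_{n,s}=D_{n,s}\setminus\{1^s\}$. The sets $D_{n,t}\subseteq[n]^t$ are defined recursively: $D_{n,1}=\{1\}$, $D_{n,2}=\{11,21,\dots,n1\}$. For $t\geq 3$ and $\mathbf v=v_1\cdots v_{t-2}\in D_{n,t-2}$ put $E_1(\mathbf v)=\{v_1\cdots v_{t-2}\alpha\alpha:\alpha\in[n]\}$, $E_2(\mathbf v)=\{v_1\cdots v_{t-3}\alpha\beta v_{t-2}:\alpha,\beta\in[n]\setminus\{v_{t-2}\}\}$, and, if $\mathbf v$ is not a constant word, let $\ell$ be the largest index in $[t-3]$ with $v_\ell\neq v_{\ell+1}$ and put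 $E_3(\mathbf v)=\{v_1\cdots v_{\ell-1}v_{\ell+1}v_\ell^{\,t-\ell-2}\alpha v_\ell:\alpha\in[n]\setminus\{v_\ell\}\}$. If $t\geq 3$ is odd, $D_{n,t}=E_1(1^{t-2})\cup E_2(1^{t-2})\cup\bigcup_{\mathbf v\in D_{n,t-2}\setminus\{1^{t-2}\}}\big(E_1(\mathbf v)\cup E_2(\mathbf v)\cup E_3(\mathbf v)\big)$. If $t\geq 4$ is even, $D_{n,t}=\{1^{t-2}\alpha1:\alpha\in[n]\}\cup\bigcup_{\mathbf v\in D_{n,t-2}\setminus\{1^{t-2}\}}\big(E_1(\mathbf v)\cup E_2(\mathbf v)\cup E_3(\mathbf v)\big)$. (In this recursion $1^{t-2}\in D_{n,t-2}$ is the only constant word in $D_{n,t-2}$, so $E_3$ is applied only to non-constant words.) Here $E_1,E_2$ are defined on $D_{n,t-2}$ and $E_3$ on $D^*_{n,t-2}$. *)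

theory Defs
  imports Main
begin

text \<open>Words in [n]^t are lists of naturals of length t with letters in {1..n};
  the i-th letter v_i (1-indexed) is v ! (i-1).\<close>

definition E1 :: "nat \<Rightarrow> nat list \<Rightarrow> nat list set" where
  "E1 n v = {v @ [a, a] | a. a \<in> {1..n}}"

definition E2 :: "nat \<Rightarrow> nat list \<Rightarrow> nat list set" where
  "E2 n v = {take (length v - 1) v @ [a, b, last v] | a b.
              a \<in> {1..n} - {last v} \<and> b \<in> {1..n} - {last v}}"

definition lidx :: "nat list \<Rightarrow> nat" where
  "lidx v = Max {l \<in> {1..length v - 1}. v ! (l - 1) \<noteq> v ! l}"

definition E3 :: "nat \<Rightarrow> nat list \<Rightarrow> nat list set" where
  "E3 n v = (let l = lidx v; m = length v in
     {take (l - 1) v @ [v ! l] @ replicate (m - l) (v ! (l - 1)) @ [a, v ! (l - 1)] | a.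
        a \<in> {1..n} - {v ! (l - 1)}})"

fun D :: "nat \<Rightarrow> nat \<Rightarrow> nat list set" where
  "D n 0 = {}"
| "D n (Suc 0) = {[1]}"
| "D n (Suc (Suc 0)) = {[a, 1] | a. a \<in> {1..n}}"
| "D n (Suc (Suc (Suc k))) =
     (let t = k + 3; P = D n (Suc k); c = replicate (Suc k) 1 in
      if odd t then
        E1 n c \<union> E2 n c \<union> (\<Union>v \<in> P - {c}. E1 n v \<union> E2 n v \<union> E3 n v)
      else
        {c @ [a, 1] | a. a \<in> {1..n}} \<union> (\<Union>v \<in> P - {c}. E1 n v \<union> E2 n v \<union> E3 n v))"

definition Dstar :: "nat \<Rightarrow> nat \<Rightarrow> nat list set" where
  "Dstar n s = D n s - {replicate s 1}"

end

theory Submission imports Defs begin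

definition nc :: "nat list \<Rightarrow> bool" where
  "nc x \<longleftrightarrow> (\<exists>i. Suc i < length x \<and> x!i \<noteq> x!Suc i)"

lemma lidx_props:
  assumes "nc v"
  shows "1 \<le> lidx v" "lidx v < length v" "v!(lidx v - 1) \<noteq> v!lidx v"
    "\<And>j. lidx v < j \<Longrightarrow> j < length v \<Longrightarrow> v!(j-1) = v!j"
proof -
  obtain i where i: "Suc i < length v" "v!i \<noteq> v!Suc i" using assms nc_def by auto
  define L where "L = {l \<in> {1..length v - 1}. v ! (l - 1) \<noteq> v ! l}"
  have fin: "finite L" unfolding L_def by auto
  have "Suc i \<in> L" using i unfolding L_def by auto
  hence ne: "L \<noteq> {}" by auto
  have M: "lidx v = Max L" unfolding lidx_def L_def by simp
  have "lidx v \<in> L" using Max_in[OF fin ne] M by simp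
  thus "1 \<le> lidx v" "lidx v < length v" "v!(lidx v - 1) \<noteq> v!lidx v"
    using i unfolding L_def by auto
  fix j assume "lidx v < j" "j < length v"
  moreover have "j \<in> L \<Longrightarrow> j \<le> Max L" using Max_ge[OF fin] by auto
  ultimately show "v!(j-1) = v!j" unfolding M L_def by fastforce
qed

lemma e3nth:
  fixes x c a :: nat
  assumes "1 \<le> l" "l < m" "length v = m"
  defines "y \<equiv> take (l-1) v @ [x] @ replicate (m-l) c @ [a,c]"
  shows "length y = m+2"
    "i < l-1 \<Longrightarrow> y!i = v!i"
    "y!(l-1) = x"
    "l \<le> i \<Longrightarrow> i < m \<Longrightarrow> y!i = c"
    "y!m = a" "y!(Suc m) = c"
  using assms by (auto simp: nth_append min_def)

lemma app2: "xs @ [p,q] = ys @ [p',q'] \<longleftrightarrow> xs = ys \<and> p = p' \<and> q = q'"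
proof
  assume "xs @ [p,q] = ys @ [p',q']"
  hence "rev (xs @ [p,q]) = rev (ys @ [p',q'])" by simp
  thus "xs = ys \<and> p = p' \<and> q = q'" by simp
qed simp

lemma E3_mem:
  "x \<in> E3 n v \<longleftrightarrow> (\<exists>a. a \<in> {1..n} \<and> a \<noteq> v!(lidx v - 1) \<and>
     x = take (lidx v - 1) v @ [v ! lidx v] @ replicate (length v - lidx v) (v ! (lidx v - 1)) @ [a, v ! (lidx v - 1)])"
  unfolding E3_def Let_def by auto

lemma E1_inv:
  assumes "length v = s" "1 \<le> s" "v = replicate s 1 \<or> nc v" "x \<in> E1 n v"
  shows "length x = s+2 \<and> (x = replicate (s+2) 1 \<or> nc x)"
proof -
  obtain a where x: "x = v @ [a,a]" using assms(4) unfolding E1_def by auto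
  show ?thesis
  proof (cases "v = replicate s 1")
    case True
    show ?thesis
    proof (cases "a = 1")
      case True thus ?thesis using x \<open>v = replicate s 1\<close> assms(1)
        by (simp add: replicate_append_same[symmetric] numeral_2_eq_2)
    next
      case False
      have "Suc (s-1) < length x \<and> x!(s-1) \<noteq> x!Suc (s-1)" using x True False assms(1,2) by (auto simp: nth_append)
      hence "nc x" unfolding nc_def by blast
      thus ?thesis using x assms by auto
    qed
  next
    case False
    then obtain i where "Suc i < length v" "v!i \<noteq> v!Suc i" using assms(3) nc_def by auto
    hence "Suc i < length x \<and> x!i \<noteq> x!Suc i" using x by (auto simp: nth_append)
    thus ?thesis unfolding nc_def using x assms by auto
  qed
qed

lemma E2_inv:
  assumes "length v = s" "1 \<le> s" "x \<in> E2 n v"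
  shows "length x = s+2 \<and> nc x"
proof -
  obtain a b where x: "x = take (s-1) v @ [a,b,last v]" "b \<noteq> last v"
    using assms unfolding E2_def by auto
  have "x!s \<noteq> x!Suc s" using x assms by (auto simp: nth_append)
  thus ?thesis unfolding nc_def using x assms by auto
qed

lemma E3_inv:
  assumes "length v = s" "nc v" "x \<in> E3 n v"
  shows "length x = s+2 \<and> nc x"
proof -
  note L = lidx_props[OF assms(2)]
  obtain a where a: "a \<noteq> v!(lidx v - 1)"
    "x = take (lidx v - 1) v @ [v ! lidx v] @ replicate (s - lidx v) (v ! (lidx v - 1)) @ [a, v ! (lidx v - 1)]"
    using assms(3,1) unfolding E3_mem by auto
  note N = e3nth[where x="v ! lidx v" and c="v ! (lidx v - 1)" and a=a, OF L(1) L(2)[unfolded assms(1)] assms(1)]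
  have "x!s \<noteq> x!Suc s" using a N by simp
  thus ?thesis unfolding nc_def using a N by auto
qed

lemma S_inv:
  assumes "x = replicate s 1 @ [a,1]"
  shows "length x = s+2 \<and> (x = replicate (s+2) 1 \<or> nc x)"
proof (cases "a = 1")
  case True thus ?thesis using assms
    by (simp add: replicate_append_same[symmetric] numeral_2_eq_2)
next
  case False
  have "x!s \<noteq> x!Suc s" using assms False by (auto simp: nth_append)
  thus ?thesis unfolding nc_def using assms by auto
qed

lemma D_inv: "x \<in> D n s \<Longrightarrow> length x = s \<and> (x = replicate s 1 \<or> nc x)"
proof (induction n s arbitrary: x rule: D.induct)
  case (1 n) thus ?case by simp
next
  case (2 n) thus ?case by simp
next
  case (3 n)
  then obtain a where x: "x = [a,1]" by auto
  show ?case using S_inv[of x 0 a] x by (simp add: numeral_2_eq_2)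
next
  case (4 n k)
  define c where "c = replicate (Suc k) (1::nat)"
  have IH: "\<And>v. v \<in> D n (Suc k) \<Longrightarrow> length v = Suc k \<and> (v = c \<or> nc v)"
    using 4(1) c_def by blast
  have G: "length x = Suc (Suc (Suc k)) \<and> (x = replicate (Suc (Suc (Suc k))) 1 \<or> nc x)"
    if "v \<in> D n (Suc k) - {c}" "x \<in> E1 n v \<union> E2 n v \<union> E3 n v" for v
  proof -
    have v: "length v = Suc k" "nc v" using IH that(1) by auto
    show ?thesis using that(2) E1_inv[OF v(1) _ disjI2[OF v(2)], of x n] E2_inv[OF v(1), of x n]
      E3_inv[OF v(1,2), of x n] by auto
  qed
  have lc: "length c = Suc k" by (simp add: c_def)
  show ?case
  proof (cases "odd (k+3)")
    case True
    hence "x \<in> E1 n c \<union> E2 n c \<or> (\<exists>v \<in> D n (Suc k) - {c}. x \<in> E1 n v \<union> E2 n v \<union> E3 n v)"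
      using 4(2) unfolding c_def by (simp add: Let_def)
    thus ?thesis using G E1_inv[OF lc _ disjI1[OF c_def], of x n] E2_inv[OF lc, of x n]
      by (auto simp: c_def)
  next
    case False
    hence "(\<exists>a. x = c @ [a,1]) \<or> (\<exists>v \<in> D n (Suc k) - {c}. x \<in> E1 n v \<union> E2 n v \<union> E3 n v)"
      using 4(2) unfolding c_def by (auto simp: Let_def)
    thus ?thesis using G S_inv[of x "Suc k"] by (auto simp: c_def)
  qed
qed


lemma tail_const:
  assumes "nc u" "lidx u \<le> j" "j < length u"
  shows "u!j = u!(lidx u)"
  using assms(2,3)
proof (induction j rule: dec_induct)
  case base thus ?case by simp
next
  case (step j)
  have "u!(Suc j - 1) = u!Suc j" using lidx_props(4)[OF assms(1), of "Suc j"] step by simp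
  thus ?case using step by simp
qed

lemma E2_mem: "x \<in> E2 n v \<Longrightarrow> \<exists>a b. x = take (length v - 1) v @ [a,b,last v] \<and> a \<noteq> last v \<and> b \<noteq> last v"
  unfolding E2_def by auto

lemma E1_mem: "x \<in> E1 n v \<Longrightarrow> \<exists>a. x = v @ [a,a]"
  unfolding E1_def by auto

lemma E3_mem': assumes "x \<in> E3 n v"
  shows "\<exists>a. a \<noteq> v!(lidx v - 1) \<and>
     x = take (lidx v - 1) v @ [v ! lidx v] @ replicate (length v - lidx v) (v ! (lidx v - 1)) @ [a, v ! (lidx v - 1)]"
  using assms unfolding E3_mem by auto

lemma L1: "E1 n u \<inter> E2 n v = {}"
proof -
  { fix x assume "x \<in> E1 n u" "x \<in> E2 n v"
    then obtain a a' b where "x = u @ [a,a]" "x = (take (length v - 1) v @ [a']) @ [b,last v]" "b \<noteq> last v"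
      using E1_mem E2_mem by fastforce
    hence False by (simp only: app2; simp) }
  thus ?thesis by blast
qed

lemma L2: "E1 n u \<inter> E3 n w = {}"
proof -
  { fix x assume "x \<in> E1 n u" "x \<in> E3 n w"
    then obtain a a' P c where "x = u @ [a,a]" "x = P @ [a',c]" "a' \<noteq> c"
      using E1_mem[of x n u] E3_mem'[of x n w] by (metis append_assoc)
    hence False by (simp only: app2; simp) }
  thus ?thesis by blast
qed

lemma L3:
  assumes "length v = m" "length w = m" "1 \<le> m" "nc w"
  shows "E2 n v \<inter> E3 n w = {}"
proof -
  note L = lidx_props[OF assms(4)]
  { fix x assume "x \<in> E2 n v" "x \<in> E3 n w"
    then obtain a b a' where x: "x = take (m - 1) v @ [a,b,last v]" "a \<noteq> last v"
      and y: "x = take (lidx w - 1) w @ [w ! lidx w] @ replicate (m - lidx w) (w ! (lidx w - 1)) @ [a', w ! (lidx w - 1)]"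
      using E2_mem[of x n v] E3_mem'[of x n w] assms by auto
    note N = e3nth[where x="w ! lidx w" and c="w ! (lidx w - 1)" and a=a', OF L(1) L(2)[unfolded assms(2)] assms(2)]
    have "x!(m-1) = a" "x!(Suc m) = last v" using x assms by (auto simp: nth_append)
    moreover have "x!(m-1) = w ! (lidx w - 1)" unfolding y using L assms by (intro N(4)) auto
    moreover have "x!(Suc m) = w ! (lidx w - 1)" unfolding y by (rule N(6))
    ultimately have False using x(2) by simp }
  thus ?thesis by blast
qed

lemma L4:
  assumes "u \<noteq> replicate m 1"
  shows "E1 n u \<inter> {replicate m 1 @ [a, 1] | a. a \<in> {1..n}} = {}"
proof -
  { fix x a b assume "x \<in> E1 n u" "x = replicate m 1 @ [b, 1]"
    then obtain a where "x = u @ [a,a]" using E1_mem by blast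
    hence False using \<open>x = replicate m 1 @ [b, 1]\<close> assms by (simp only: app2; simp) }
  thus ?thesis by blast
qed

lemma L5:
  assumes "length v = m" "1 \<le> m"
  shows "E2 n v \<inter> {replicate m 1 @ [a, 1] | a. a \<in> {1..n}} = {}"
proof -
  { fix x b assume "x \<in> E2 n v" "x = replicate m 1 @ [b, 1]"
    then obtain a a' where x: "x = take (m - 1) v @ [a,a',last v]" "a \<noteq> last v"
      using E2_mem[of x n v] assms by auto
    have "x!(m-1) = a" "x!(Suc m) = last v" using x assms by (auto simp: nth_append)
    moreover have "x!(m-1) = 1" "x!(Suc m) = 1" using \<open>x = replicate m 1 @ [b, 1]\<close> assms
      by (auto simp: nth_append)
    ultimately have False using x(2) by simp }
  thus ?thesis by blast
qed

lemma L6: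
  assumes "length w = m" "nc w"
  shows "E3 n w \<inter> {replicate m 1 @ [a, 1] | a. a \<in> {1..n}} = {}"
proof -
  note L = lidx_props[OF assms(2)]
  { fix x b assume xE: "x \<in> E3 n w" and xS: "x = replicate m 1 @ [b, 1]"
    from E3_mem'[OF xE] obtain a' where 
      y: "x = take (lidx w - 1) w @ [w ! lidx w] @ replicate (m - lidx w) (w ! (lidx w - 1)) @ [a', w ! (lidx w - 1)]"
      using assms(1) by auto
    note N = e3nth[where x="w ! lidx w" and c="w ! (lidx w - 1)" and a=a', OF L(1) L(2)[unfolded assms(1)] assms(1)]
    have "x!(lidx w - 1) = w!lidx w" unfolding y by (rule N(3))
    moreover have "x!(Suc m) = w ! (lidx w - 1)" unfolding y by (rule N(6))
    moreover have "x!(lidx w - 1) = 1" "x!(Suc m) = 1" using \<open>x = replicate m 1 @ [b, 1]\<close> assms L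
      by (auto simp: nth_append)
    ultimately have False using L(3) by simp }
  thus ?thesis by blast
qed

lemma L7: "u \<noteq> v \<Longrightarrow> E1 n u \<inter> E1 n v = {}"
  by (auto simp: E1_def app2)

lemma L8:
  assumes "u \<noteq> v" "u \<noteq> []" "v \<noteq> []"
  shows "E2 n u \<inter> E2 n v = {}"
proof -
  { fix x assume "x \<in> E2 n u" "x \<in> E2 n v"
    then obtain a b a' b' where "x = (butlast u @ [a]) @ [b,last u]" "x = (butlast v @ [a']) @ [b',last v]"
      using E2_mem[of x n u] E2_mem[of x n v] by (auto simp: butlast_conv_take)
    hence "(butlast u @ [a]) @ [b,last u] = (butlast v @ [a']) @ [b',last v]" by simp
    hence "butlast u @ [a] = butlast v @ [a'] \<and> last u = last v" by (simp only: app2)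
    hence "butlast u = butlast v" "last u = last v" by simp_all
    hence "u = v" using assms(2,3) by (metis append_butlast_last_id)
    hence False using assms(1) by simp }
  thus ?thesis by blast
qed

lemma L9:
  assumes "u \<noteq> v" "length u = m" "length v = m" "nc u" "nc v"
  shows "E3 n u \<inter> E3 n v = {}"
proof -
  note Lu = lidx_props[OF assms(4)] and Lv = lidx_props[OF assms(5)]
  { fix x assume "x \<in> E3 n u" "x \<in> E3 n v"
    then obtain a b where 
      yu: "x = take (lidx u - 1) u @ [u ! lidx u] @ replicate (m - lidx u) (u ! (lidx u - 1)) @ [a, u ! (lidx u - 1)]"
      and yv: "x = take (lidx v - 1) v @ [v ! lidx v] @ replicate (m - lidx v) (v ! (lidx v - 1)) @ [b, v ! (lidx v - 1)]"
      using E3_mem'[of x n u] E3_mem'[of x n v] assms by auto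
    note Nu = e3nth[where x="u ! lidx u" and c="u ! (lidx u - 1)" and a=a, OF Lu(1) Lu(2)[unfolded assms(2)] assms(2)]
    note Nv = e3nth[where x="v ! lidx v" and c="v ! (lidx v - 1)" and a=b, OF Lv(1) Lv(2)[unfolded assms(3)] assms(3)]
    have c: "u ! (lidx u - 1) = v ! (lidx v - 1)" using Nu(6) Nv(6) yu yv by metis
    have "\<not> lidx u < lidx v"
    proof
      assume "lidx u < lidx v"
      hence "x!(lidx v - 1) = u ! (lidx u - 1)" unfolding yu using Lv assms by (intro Nu(4)) auto
      moreover have "x!(lidx v - 1) = v ! lidx v" unfolding yv by (rule Nv(3))
      ultimately show False using c Lv(3) by simp
    qed
    moreover have "\<not> lidx v < lidx u"
    proof
      assume "lidx v < lidx u"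
      hence "x!(lidx u - 1) = v ! (lidx v - 1)" unfolding yv using Lu assms by (intro Nv(4)) auto
      moreover have "x!(lidx u - 1) = u ! lidx u" unfolding yu by (rule Nu(3))
      ultimately show False using c Lu(3) by simp
    qed
    ultimately have l: "lidx u = lidx v" by simp
    have "u = v"
    proof (rule nth_equalityI)
      show "length u = length v" using assms by simp
      fix i assume i: "i < length u"
      consider "i < lidx u - 1" | "i = lidx u - 1" | "i = lidx u" | "lidx u < i" by linarith
      thus "u!i = v!i"
      proof cases
        case 1 thus ?thesis using Nu(2)[of i] Nv(2)[of i] yu yv l by metis
      next
        case 2 thus ?thesis using c l by simp
      next
        case 3 thus ?thesis using Nu(3) Nv(3) yu yv l by metis
      next
        case 4
        have "u!i = u!lidx u" using tail_const[OF assms(4), of i] 4 i by simp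
        moreover have "v!i = v!lidx v" using tail_const[OF assms(5), of i] 4 i l assms by simp
        moreover have "u!lidx u = v!lidx v" using Nu(3) Nv(3) yu yv l by metis
        ultimately show ?thesis by simp
      qed
    qed
    hence False using assms(1) by simp }
  thus ?thesis by blast
qed


lemma Dstar_nc: "w \<in> Dstar n m \<Longrightarrow> nc w \<and> length w = m \<and> w \<noteq> replicate m 1"
  unfolding Dstar_def using D_inv by blast

theorem lemma2p3:
  fixes n t :: nat
  assumes "n \<ge> 3" and "t \<ge> 3"
  shows "(odd t \<longrightarrow>
            (\<forall>u \<in> D n (t - 2). \<forall>v \<in> D n (t - 2). \<forall>w \<in> Dstar n (t - 2).
               E1 n u \<inter> E2 n v = {} \<and> E1 n u \<inter> E3 n w = {} \<and> E2 n v \<inter> E3 n w = {}))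
       \<and> (even t \<longrightarrow>
            (\<forall>u \<in> Dstar n (t - 2). \<forall>v \<in> Dstar n (t - 2). \<forall>w \<in> Dstar n (t - 2).
               let S = {replicate (t - 2) 1 @ [a, 1] | a. a \<in> {1..n}} in
               E1 n u \<inter> E2 n v = {} \<and> E1 n u \<inter> E3 n w = {} \<and> E2 n v \<inter> E3 n w = {}
               \<and> E1 n u \<inter> S = {} \<and> E2 n v \<inter> S = {} \<and> E3 n w \<inter> S = {}))
       \<and> (\<forall>u \<in> D n (t - 2). \<forall>v \<in> D n (t - 2). u \<noteq> v \<longrightarrow> E1 n u \<inter> E1 n v = {})
       \<and> (\<forall>u \<in> D n (t - 2). \<forall>v \<in> D n (t - 2). u \<noteq> v \<longrightarrow> E2 n u \<inter> E2 n v = {})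
       \<and> (\<forall>u \<in> Dstar n (t - 2). \<forall>v \<in> Dstar n (t - 2). u \<noteq> v \<longrightarrow> E3 n u \<inter> E3 n v = {})"
proof -
  define m where "m = t - 2"
  have t: "t = m + 2" using assms(2) m_def by simp
  have m1: "1 \<le> m" using t assms(2) by simp
  have tm: "t - 2 = m" using t by simp
  have DL: "\<And>u. u \<in> D n m \<Longrightarrow> length u = m" using D_inv by blast
  show ?thesis unfolding tm Let_def
  proof (intro conjI impI ballI)
    fix u v w assume u: "u \<in> D n m" and v: "v \<in> D n m" and w: "w \<in> Dstar n m"
    note W = Dstar_nc[OF w]
    show "E1 n u \<inter> E2 n v = {}" by (rule L1)
    show "E1 n u \<inter> E3 n w = {}" by (rule L2)
    show "E2 n v \<inter> E3 n w = {}" using L3[OF DL[OF v] conjunct1[OF conjunct2[OF W]] m1 conjunct1[OF W]] .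
  next
    fix u v w assume u: "u \<in> Dstar n m" and v: "v \<in> Dstar n m" and w: "w \<in> Dstar n m"
    note W = Dstar_nc[OF w] and U = Dstar_nc[OF u] and V = Dstar_nc[OF v]
    show "E1 n u \<inter> E2 n v = {}" by (rule L1)
    show "E1 n u \<inter> E3 n w = {}" by (rule L2)
    show "E2 n v \<inter> E3 n w = {}" using L3[OF conjunct1[OF conjunct2[OF V]] conjunct1[OF conjunct2[OF W]] m1 conjunct1[OF W]] .
    show "E1 n u \<inter> {replicate m 1 @ [a, 1] | a. a \<in> {1..n}} = {}"
      using L4[OF conjunct2[OF conjunct2[OF U]]] .
    show "E2 n v \<inter> {replicate m 1 @ [a, 1] | a. a \<in> {1..n}} = {}"
      using L5[OF conjunct1[OF conjunct2[OF V]] m1] .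
    show "E3 n w \<inter> {replicate m 1 @ [a, 1] | a. a \<in> {1..n}} = {}"
      using L6[OF conjunct1[OF conjunct2[OF W]] conjunct1[OF W]] .
  next
    fix u v assume "u \<in> D n m" "v \<in> D n m" "u \<noteq> v"
    thus "E1 n u \<inter> E1 n v = {}" using L7 by blast
  next
    fix u v assume u: "u \<in> D n m" and v: "v \<in> D n m" and uv: "u \<noteq> v"
    have "u \<noteq> []" using DL[OF u] m1 by auto
    moreover have "v \<noteq> []" using DL[OF v] m1 by auto
    ultimately show "E2 n u \<inter> E2 n v = {}" using L8[OF uv] by blast
  next
    fix u v assume u: "u \<in> Dstar n m" and v: "v \<in> Dstar n m" and uv: "u \<noteq> v"
    note U = Dstar_nc[OF u] and V = Dstar_nc[OF v]
    show "E3 n u \<inter> E3 n v = {}"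
      using L9[OF uv conjunct1[OF conjunct2[OF U]] conjunct1[OF conjunct2[OF V]] conjunct1[OF U] conjunct1[OF V]] .
  qed
qed

end
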